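(* For all integers $n,\alpha,\beta\ge0$ and $r,s\in\mathbb{Z}$, $${n-\beta\choose\alpha}_r+{n-\alpha\choose\beta}_s={n\choose\alpha+\beta}_{r+s}+\sum_{k=0}^{n}\ \sum_{\substack{\ell,m\ge0\\ \ell+m=k-1}}{n\choose k}_{r+s}{\ell\choose\alpha}_r{m\choose\beta}_s.$$
   Context: The Euler polynomials $E_n(x)$ are defined by $\frac{2e^{xt}}{e^t+1}=\sum_{n\ge0}E_n(x)\frac{t^n}{n!}$. For integers $N\ge0$, define ${N\brack j}$ by $\sum_{j=1}^N{N\brack j}x^{2j-1}=x^{2N}-E_{2N}(x)$ and ${N\brace j}$ by $\sum_{j=0}^N{N\brace j}x^{2j}=x^{2N+1}-E_{2N+1}(x)$; set ${N\brack j}=0$ if $j\le0$ or $j>N$, ${N\brace j}=0$ if $j<0$ or $j>N$. For $r\in\mathbb{Z}$ and integers $0\le i\le n$ define $${n\choose i}_r:=\begin{cases}{r/2+n\brack r/2+i}, & r\text{ even},\ n\ge\max\{0,-r/2\},\\ -{-r/2-i\brack -r/2-n}, & r\text{ even},\ 0\le n<-r/2,\\ {(r-1)/2+n\brace (r-1)/2+i}, & r\text{ odd},\ n\ge\max\{0,-(r-1)/2\},\\ -{-(r+1)/2-i\brace -(r+1)/2-n}, & r\text{ odd},\ 0\le n<-(r-1)/2,\end{cases}$$ and set ${n\choose i}_r:=0$ whenever $n<0$, $i<0$ or $i>n$. (Equivalently, for $0\le i\le n$, ${n\choose i}_r=f_{n-i+1}\binom{r+2n}{r+2i-1}$ if $n\ge\max\{0,\lceil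 -r/2\rceil\}$ and $-f_{n-i+1}\binom{-r-2i}{-r-2n-1}$ if $0\le n<\lceil -r/2\rceil$, where $f_m=\frac{4^m-1}{m}B_{2m}$ and $B_j$ are the Bernoulli numbers.) *)

theory Defs
  imports "HOL-Computational_Algebra.Computational_Algebra"
begin

text \<open>Generating function 2 e^{xt}/(e^t+1) as a formal power series in t whose
coefficients are real polynomials in x.  e^{xt} has t^n-coefficient x^n/n!;
the factor 2/(e^t+1) is a power series with real (constant) coefficients.\<close>

definition exp_xt :: "real poly fps" where
  "exp_xt = Abs_fps (\<lambda>n. monom (1 / fact n) n)"

definition euler_gf :: "real poly fps" where
  "euler_gf = exp_xt * Abs_fps (\<lambda>k. [: fps_nth (2 * inverse (fps_exp (1::real) + 1)) k :])"

definition Euler_poly :: "nat \<Rightarrow> real poly" where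
  "Euler_poly n = smult (fact n) (fps_nth euler_gf n)"

definition ebrack :: "int \<Rightarrow> int \<Rightarrow> real" where
  "ebrack N j = (if 1 \<le> j \<and> j \<le> N
     then coeff (monom 1 (nat (2*N)) - Euler_poly (nat (2*N))) (nat (2*j - 1)) else 0)"

definition ebrace :: "int \<Rightarrow> int \<Rightarrow> real" where
  "ebrace N j = (if 0 \<le> j \<and> j \<le> N
     then coeff (monom 1 (nat (2*N+1)) - Euler_poly (nat (2*N+1))) (nat (2*j)) else 0)"

definition gbin :: "int \<Rightarrow> int \<Rightarrow> int \<Rightarrow> real" where
  "gbin r n i =
    (if n < 0 \<or> i < 0 \<or> i > n then 0
     else if even r then
       (if n \<ge> max 0 (- (r div 2)) then ebrack (r div 2 + n) (r div 2 + i)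
        else - ebrack (- (r div 2) - i) (- (r div 2) - n))
     else
       (if n \<ge> max 0 (- ((r - 1) div 2)) then ebrace ((r - 1) div 2 + n) ((r - 1) div 2 + i)
        else - ebrace (- ((r + 1) div 2) - i) (- ((r + 1) div 2) - n)))"

end

theory Submission
  imports Defs
begin

definition Tf :: "real fps" where "Tf = 1 - 2 * inverse (fps_exp 1 + 1)"
definition tt :: "nat \<Rightarrow> real" where "tt q = Tf $ q"

lemma euler_gf_nth_coeff:
  "coeff (euler_gf $ N) j = (if j \<le> N then fps_nth (2 * inverse (fps_exp (1::real) + 1)) (N - j) / fact j else 0)"
proof -
  have "euler_gf $ N = (\<Sum>k=0..N. monom (1 / fact k) k * [: fps_nth (2 * inverse (fps_exp (1::real) + 1)) (N - k) :])"
    by (simp add: euler_gf_def fps_mult_nth exp_xt_def)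
  moreover have "\<And>c d k. coeff (monom c k * [:d:]) j = (if j = k then c * (d::real) else 0)"
    by (simp add: coeff_monom_mult coeff_pCons split: nat.split)
  ultimately show ?thesis
    by (simp add: coeff_sum if_distrib sum.delta cong: if_cong)
qed

lemma fact_split: "(fact (j + q) :: real) = fact j * pochhammer (of_nat j + 1) q"
  by (simp add: pochhammer_fact pochhammer_product' add.commute)

lemma Euler_coeff:
  assumes "j < N"
  shows "coeff (monom 1 N - Euler_poly N) j = pochhammer (of_nat j + 1) (N - j) * tt (N - j)"
proof -
  obtain q where q: "N = j + q" "q > 0" using assms by (metis add_diff_inverse_nat less_imp_add_positive not_less_iff_gr_or_eq)
  have "tt q = - fps_nth (2 * inverse (fps_exp (1::real) + 1)) q"
    using q by (simp add: tt_def Tf_def)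
  then show ?thesis using q
    by (simp add: Euler_poly_def euler_gf_nth_coeff fact_split)
qed

lemma Euler_coeff_int:
  assumes "0 \<le> J" "J < M"
  shows "coeff (monom 1 (nat M) - Euler_poly (nat M)) (nat J) = pochhammer (of_int (J + 1)) (nat (M - J)) * tt (nat (M - J))"
proof -
  have "nat J < nat M" using assms by simp
  from Euler_coeff[OF this] show ?thesis using assms
    by (simp add: nat_diff_distrib)
qed

lemma Euler_coeff_int':
  assumes "0 \<le> J" "J < M" "M - J = int q" "J + 1 = z"
  shows "coeff (monom 1 (nat M) - Euler_poly (nat M)) (nat J) = pochhammer (of_int z) q * tt q"
  using Euler_coeff_int[OF assms(1,2)] assms(3,4) by simp

lemma poch_zero:
  assumes "z \<le> 0" "z + int q > 0"
  shows "pochhammer (of_int z :: real) q = 0"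
  unfolding pochhammer_eq_0_iff
  by (rule exI[of _ "nat (-z)"]) (use assms in auto)

lemma poch_neg:
  assumes "odd q"
  shows "pochhammer (of_int z :: real) q = - pochhammer (of_int (- (z + int q - 1))) q"
proof -
  have "pochhammer (- (of_int (z + int q - 1)) :: real) q = (-1)^q * pochhammer (of_int (z + int q - 1) - of_nat q + 1) q"
    by (rule pochhammer_minus)
  then show ?thesis using assms by simp
qed

lemma gbin_eq:
  "gbin r n i = (if 0 \<le> i \<and> i \<le> n then pochhammer (of_int (r + 2*i)) (nat (2*(n-i)+1)) * tt (nat (2*(n-i)+1)) else 0)"
proof (cases "0 \<le> i \<and> i \<le> n")
  case False
  then show ?thesis by (auto simp: gbin_def)
next
  case True
  define q where "q = nat (2*(n-i)+1)"
  have oq: "odd q" unfolding q_def using True by (simp add: even_nat_iff)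
  have qi: "int q = 2*(n-i)+1" unfolding q_def using True by simp
  have iin: "i \<le> n" "0 \<le> i" using True by auto
  show ?thesis
  proof (cases "even r")
    case ev: True
    define h where "h = r div 2"
    have rh: "r = 2*h" using ev unfolding h_def by simp
    show ?thesis
    proof (cases "n \<ge> max 0 (- h)")
      case c1: True
      show ?thesis
      proof (cases "1 \<le> h + i")
        case True
        have "gbin r n i = ebrack (h+n) (h+i)" using c1 ev \<open>0 \<le> i \<and> i \<le> n\<close> by (simp add: gbin_def h_def)
        also have "\<dots> = coeff (monom 1 (nat (2*(h+n))) - Euler_poly (nat (2*(h+n)))) (nat (2*(h+i) - 1))"
          using True \<open>0 \<le> i \<and> i \<le> n\<close> by (simp add: ebrack_def)
        also have "\<dots> = pochhammer (of_int (r + 2*i)) q * tt q"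
          by (rule Euler_coeff_int'; insert True qi iin rh; presburger)
        finally show ?thesis using \<open>0 \<le> i \<and> i \<le> n\<close> by (simp add: q_def)
      next
        case False
        have "gbin r n i = ebrack (h+n) (h+i)" using c1 ev \<open>0 \<le> i \<and> i \<le> n\<close> by (simp add: gbin_def h_def)
        also have "\<dots> = 0" using False by (simp add: ebrack_def)
        also have "0 = pochhammer (of_int (r + 2*i)) q * tt q"
          using poch_zero[of "r+2*i" q] False c1 qi rh by simp
        finally show ?thesis using \<open>0 \<le> i \<and> i \<le> n\<close> by (simp add: q_def)
      qed
    next
      case c2: False
      have "gbin r n i = - ebrack (- h - i) (- h - n)" using c2 ev \<open>0 \<le> i \<and> i \<le> n\<close> by (simp add: gbin_def h_def)
      also have "\<dots> = - coeff (monom 1 (nat (2*(- h - i))) - Euler_poly (nat (2*(- h - i)))) (nat (2*(- h - n) - 1))"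
        using c2 \<open>0 \<le> i \<and> i \<le> n\<close> by (simp add: ebrack_def)
      also have "\<dots> = - pochhammer (of_int (- (r + 2*i + int q - 1))) q * tt q"
        using Euler_coeff_int'[of _ _ q "- (r + 2*i + int q - 1)"] c2 qi iin rh by simp
      also have "\<dots> = pochhammer (of_int (r + 2*i)) q * tt q"
        using poch_neg[OF oq, of "r+2*i"] by simp
      finally show ?thesis using \<open>0 \<le> i \<and> i \<le> n\<close> by (simp add: q_def)
    qed
  next
    case od: False
    define h where "h = (r - 1) div 2"
    have rh: "r = 2*h + 1" using od unfolding h_def by presburger
    have h1: "(r + 1) div 2 = h + 1" using rh by simp
    show ?thesis
    proof (cases "n \<ge> max 0 (- h)")
      case c1: True
      show ?thesis
      proof (cases "0 \<le> h + i")
        case True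
        have "gbin r n i = ebrace (h+n) (h+i)" using c1 od \<open>0 \<le> i \<and> i \<le> n\<close> by (simp add: gbin_def h_def)
        also have "\<dots> = coeff (monom 1 (nat (2*(h+n)+1)) - Euler_poly (nat (2*(h+n)+1))) (nat (2*(h+i)))"
          using True \<open>0 \<le> i \<and> i \<le> n\<close> by (simp add: ebrace_def)
        also have "\<dots> = pochhammer (of_int (r + 2*i)) q * tt q"
          by (rule Euler_coeff_int'; insert True qi iin rh; presburger)
        finally show ?thesis using \<open>0 \<le> i \<and> i \<le> n\<close> by (simp add: q_def)
      next
        case False
        have "gbin r n i = ebrace (h+n) (h+i)" using c1 od \<open>0 \<le> i \<and> i \<le> n\<close> by (simp add: gbin_def h_def)
        also have "\<dots> = 0" using False by (simp add: ebrace_def)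
        also have "0 = pochhammer (of_int (r + 2*i)) q * tt q"
          using poch_zero[of "r+2*i" q] False c1 qi rh by simp
        finally show ?thesis using \<open>0 \<le> i \<and> i \<le> n\<close> by (simp add: q_def)
      qed
    next
      case c2: False
      have "gbin r n i = - ebrace (- (h+1) - i) (- (h+1) - n)" using c2 od \<open>0 \<le> i \<and> i \<le> n\<close> h1 by (simp add: gbin_def h_def)
      also have "\<dots> = - coeff (monom 1 (nat (2*(- (h+1) - i)+1)) - Euler_poly (nat (2*(- (h+1) - i)+1))) (nat (2*(- (h+1) - n)))"
        using c2 \<open>0 \<le> i \<and> i \<le> n\<close> by (simp add: ebrace_def)
      also have "\<dots> = - pochhammer (of_int (- (r + 2*i + int q - 1))) q * tt q"
        using Euler_coeff_int'[of _ _ q "- (r + 2*i + int q - 1)"] c2 qi iin rh by simp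
      also have "\<dots> = pochhammer (of_int (r + 2*i)) q * tt q"
        using poch_neg[OF oq, of "r+2*i"] by simp
      finally show ?thesis using \<open>0 \<le> i \<and> i \<le> n\<close> by (simp add: q_def)
    qed
  qed
qed

definition sc :: "real \<Rightarrow> real fps \<Rightarrow> real fps" where
  "sc c f = Abs_fps (\<lambda>n. c^n * f $ n)"

lemma sc_nth[simp]: "sc c f $ n = c^n * f $ n" by (simp add: sc_def)

lemma sc_mult: "sc c (f * g) = sc c f * sc c g"
proof (rule fps_ext)
  fix n
  have "(\<Sum>i=0..n. c^n * (f $ i * g $ (n - i))) = (\<Sum>i=0..n. c^i * f $ i * (c^(n-i) * g $ (n - i)))"
    by (rule sum.cong) (auto simp: power_add[symmetric] mult_ac)
  then show "sc c (f * g) $ n = (sc c f * sc c g) $ n"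
    by (simp add: fps_mult_nth sum_distrib_left)
qed

lemma sc_add: "sc c (f + g) = sc c f + sc c g" by (rule fps_ext) (simp add: algebra_simps)
lemma sc_diff: "sc c (f - g) = sc c f - sc c g" by (rule fps_ext) (simp add: algebra_simps)
lemma sc_one: "sc c 1 = 1" by (rule fps_ext) simp
lemma sc_exp: "sc c (fps_exp 1) = fps_exp c" by (rule fps_ext) simp

lemma Tf_eq: "Tf * (fps_exp 1 + 1) = fps_exp 1 - 1"
proof -
  have "inverse (fps_exp (1::real) + 1) * (fps_exp 1 + 1) = 1"
    by (rule inverse_mult_eq_1) simp
  then show ?thesis unfolding Tf_def by (simp add: algebra_simps)
qed

definition TT :: "real \<Rightarrow> real fps" where "TT c = sc c Tf"

lemma TT_eq: "TT c * (fps_exp c + 1) = fps_exp c - 1"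
proof -
  have "sc c (Tf * (fps_exp 1 + 1)) = sc c (fps_exp 1 - 1)" by (simp add: Tf_eq)
  then show ?thesis by (simp add: TT_def sc_mult sc_add sc_diff sc_one sc_exp)
qed

lemma exp1_nz: "fps_exp (c::real) + 1 \<noteq> 0"
proof
  assume "fps_exp c + 1 = 0"
  then have "(fps_exp c + 1) $ 0 = 0" by simp
  then show False by simp
qed

lemma TT_add: "TT (a + b) * TT a * TT b = TT a + TT b - TT (a + b)"
proof -
  define Ea where "Ea = fps_exp a"
  define Eb where "Eb = fps_exp b"
  have Eab: "fps_exp (a+b) = Ea * Eb" by (simp add: Ea_def Eb_def fps_exp_add_mult)
  have A: "TT a * (Ea + 1) = Ea - 1" by (simp add: Ea_def TT_eq)
  have B: "TT b * (Eb + 1) = Eb - 1" by (simp add: Eb_def TT_eq)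
  have C: "TT (a+b) * (Ea * Eb + 1) = Ea * Eb - 1" using TT_eq[of "a+b"] Eab by simp
  have nz: "(Ea + 1) * (Eb + 1) * (Ea * Eb + 1) \<noteq> 0"
    using exp1_nz[of a] exp1_nz[of b] exp1_nz[of "a+b"] Eab by (simp add: Ea_def Eb_def)
  have "(TT (a + b) * TT a * TT b) * ((Ea + 1) * (Eb + 1) * (Ea * Eb + 1))
      = (TT (a+b) * (Ea * Eb + 1)) * (TT a * (Ea + 1)) * (TT b * (Eb + 1))" by (simp add: mult_ac)
  also have "\<dots> = (Ea * Eb - 1) * (Ea - 1) * (Eb - 1)" by (simp add: A B C)
  also have "\<dots> = (TT a * (Ea + 1)) * (Eb + 1) * (Ea * Eb + 1) + (TT b * (Eb + 1)) * (Ea + 1) * (Ea * Eb + 1)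
      - (TT (a+b) * (Ea * Eb + 1)) * (Ea + 1) * (Eb + 1)"
    unfolding A B C by (simp add: algebra_simps)
  also have "\<dots> = (TT a + TT b - TT (a + b)) * ((Ea + 1) * (Eb + 1) * (Ea * Eb + 1))"
    by (simp add: algebra_simps)
  finally show ?thesis using nz by simp
qed

lemma TT_neg: "TT (-1) = - Tf"
proof -
  have E: "fps_exp (-1::real) * fps_exp 1 = 1" using fps_exp_add_mult[of "-1::real" 1] by simp
  have "TT (-1) * (fps_exp 1 + 1) = (TT (-1) * (fps_exp (-1) + 1)) * fps_exp 1"
    using E by (simp add: algebra_simps)
  also have "\<dots> = (fps_exp (-1) - 1) * fps_exp 1" by (simp add: TT_eq)
  also have "\<dots> = (- Tf) * (fps_exp 1 + 1)" using E Tf_eq by (simp add: algebra_simps)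
  finally show ?thesis using exp1_nz[of 1] mult_right_cancel by blast
qed

lemma tt_even: "even q \<Longrightarrow> tt q = 0"
proof -
  assume "even q"
  have "TT (-1) $ q = (- Tf) $ q" by (simp add: TT_neg)
  then show "tt q = 0" using \<open>even q\<close> by (simp add: TT_def tt_def)
qed

lemma TT_one: "TT 1 = Tf" by (rule fps_ext) (simp add: TT_def)

lemma inner_sum:
  fixes u v :: real
  assumes "d + i + j = Q"
  shows "(\<Sum>m\<le>Q. pochhammer u (Q-m) * pochhammer v m * (if d \<le> m then of_nat (i choose (m-d)) else 0))
       = pochhammer u j * pochhammer v d * pochhammer (u + v + of_nat (j+d)) i"
proof -
  let ?g = "\<lambda>m. pochhammer u (Q-m) * pochhammer v m * of_nat (i choose (m-d))"
  have "(\<Sum>m\<le>Q. pochhammer u (Q-m) * pochhammer v m * (if d \<le> m then of_nat (i choose (m-d)) else 0))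
      = (\<Sum>m\<in>{..Q} \<inter> {m. d \<le> m}. ?g m)"
    by (simp add: sum.inter_restrict if_distrib cong: if_cong)
  also have "{..Q} \<inter> {m. d \<le> m} = {0+d..(i+j)+d}" using assms by auto
  also have "sum ?g {0+d..(i+j)+d} = (\<Sum>c=0..i+j. ?g (c + d))"
    by (rule sum.shift_bounds_cl_nat_ivl)
  also have "\<dots> = (\<Sum>c=0..i. ?g (c + d))"
    by (rule sum.mono_neutral_right) auto
  also have "\<dots> = (\<Sum>c=0..i. pochhammer u j * pochhammer v d *
        (of_nat (i choose c) * pochhammer (v + of_nat d) c * pochhammer (u + of_nat j) (i - c)))"
  proof (rule sum.cong[OF refl])
    fix c assume c: "c \<in> {0..i}"
    have q1: "Q - (c + d) = j + (i - c)" using c assms by auto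
    show "?g (c + d) = pochhammer u j * pochhammer v d *
        (of_nat (i choose c) * pochhammer (v + of_nat d) c * pochhammer (u + of_nat j) (i - c))"
      using pochhammer_product'[of v d c] pochhammer_product'[of u j "i - c"]
      unfolding q1 by (simp add: add.commute[of c d] mult_ac)
  qed
  also have "\<dots> = pochhammer u j * pochhammer v d *
        (\<Sum>c\<le>i. of_nat (i choose c) * pochhammer (v + of_nat d) c * pochhammer (u + of_nat j) (i - c))"
    by (simp add: sum_distrib_left atLeast0AtMost)
  also have "\<dots> = pochhammer u j * pochhammer v d * pochhammer ((v + of_nat d) + (u + of_nat j)) i"
    by (simp add: pochhammer_binomial_sum)
  finally show ?thesis by (simp add: algebra_simps)
qed

definition Pl :: "nat \<Rightarrow> real poly" where
  "Pl Q = (\<Sum>i=0..Q. \<Sum>j=0..Q-i. smult (tt i * tt j * tt (Q-i-j)) ([:1,1:]^i * monom 1 (Q-i-j)))"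

lemma Pl_eq: "Pl Q = smult (tt Q) (1 + monom 1 Q - [:1,1:]^Q)"
proof (rule poly_ext)
  fix y :: real
  have "(TT (1+y) * (TT 1 * TT y)) $ Q = (TT 1 + TT y - TT (1+y)) $ Q"
    using TT_add[of 1 y] by (simp add: mult.assoc)
  then show "poly (Pl Q) y = poly (smult (tt Q) (1 + monom 1 Q - [:1,1:]^Q)) y"
    unfolding fps_mult_nth
    by (simp add: Pl_def poly_sum TT_def tt_def poly_monom algebra_simps sum_distrib_left)
qed

lemma coeff_lin: "coeff ([:1,1:]^i) k = (of_nat (i choose k) :: real)"
proof (cases "k \<le> i")
  case True
  then show ?thesis using coeff_linear_poly_power[of k i "1::real" 1] by simp
next
  case False
  have "degree ([:1::real,1:]^i) \<le> i"
    by (simp only: degree_linear_power)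
  then show ?thesis using False by (simp add: coeff_eq_0)
qed

lemma coeff_Pl: "coeff (Pl Q) m = (\<Sum>i=0..Q. \<Sum>j=0..Q-i. tt i * tt j * tt (Q-i-j) *
    (if Q-i-j \<le> m then of_nat (i choose (m - (Q-i-j))) else 0))"
  unfolding Pl_def coeff_sum
  by (intro sum.cong refl) (auto simp: mult.commute[of "[:1,1:]^_"] coeff_monom_mult coeff_lin)

lemma F_ident:
  fixes u v :: real
  assumes "Q \<ge> 1"
  shows "(\<Sum>i=0..Q. \<Sum>j=0..Q-i. tt i * tt j * tt (Q-i-j) *
            (pochhammer u j * pochhammer v (Q-i-j) * pochhammer (u + v + of_nat (Q-i)) i))
       = tt Q * (pochhammer u Q + pochhammer v Q - pochhammer (u+v) Q)"
proof -
  define W where "W m = pochhammer u (Q-m) * pochhammer v m" for m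
  define S where "S = (\<Sum>m\<le>Q. W m * coeff (Pl Q) m)"
  have "S = (\<Sum>m\<le>Q. \<Sum>i=0..Q. \<Sum>j=0..Q-i. tt i * tt j * tt (Q-i-j) *
      (W m * (if Q-i-j \<le> m then of_nat (i choose (m - (Q-i-j))) else 0)))"
    unfolding S_def coeff_Pl by (simp add: sum_distrib_left mult_ac)
  also have "\<dots> = (\<Sum>i=0..Q. \<Sum>j=0..Q-i. tt i * tt j * tt (Q-i-j) *
      (\<Sum>m\<le>Q. W m * (if Q-i-j \<le> m then of_nat (i choose (m - (Q-i-j))) else 0)))"
    by (subst sum.swap) (simp add: sum_distrib_left sum.swap[of _ "{..Q}"])
  also have "\<dots> = (\<Sum>i=0..Q. \<Sum>j=0..Q-i. tt i * tt j * tt (Q-i-j) *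
            (pochhammer u j * pochhammer v (Q-i-j) * pochhammer (u + v + of_nat (Q-i)) i))"
  proof (intro sum.cong refl)
    fix i j assume i: "i \<in> {0..Q}" and j: "j \<in> {0..Q-i}"
    have e1: "(Q - i - j) + i + j = Q" using i j by auto
    have e2: "j + (Q - i - j) = Q - i" using i j by auto
    show "tt i * tt j * tt (Q-i-j) *
      (\<Sum>m\<le>Q. W m * (if Q-i-j \<le> m then of_nat (i choose (m - (Q-i-j))) else 0)) =
      tt i * tt j * tt (Q-i-j) *
            (pochhammer u j * pochhammer v (Q-i-j) * pochhammer (u + v + of_nat (Q-i)) i)"
      using inner_sum[OF e1, of u v] unfolding e2 W_def by (simp add: mult.assoc)
  qed
  finally have S1: "S = \<dots>" .
  have "S = (\<Sum>m\<le>Q. W m * (tt Q * ((if m = 0 then 1 else 0) + (if m = Q then 1 else 0) - of_nat (Q choose m))))"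
    unfolding S_def Pl_eq by (intro sum.cong refl) (auto simp: coeff_1 coeff_monom coeff_lin)
  also have "\<dots> = tt Q * ((\<Sum>m\<le>Q. W m * (if m = 0 then 1 else 0)) + (\<Sum>m\<le>Q. W m * (if m = Q then 1 else 0))
       - (\<Sum>m\<le>Q. of_nat (Q choose m) * W m))"
    by (simp only: sum_distrib_left sum.distrib[symmetric] sum_subtractf[symmetric]) (simp only: algebra_simps)
  also have "(\<Sum>m\<le>Q. W m * (if m = 0 then 1 else 0)) = W 0"
    by (subst sum.mono_neutral_right[of "{..Q}" "{0}"]) auto
  also have "(\<Sum>m\<le>Q. W m * (if m = Q then 1 else 0)) = W Q"
    by (subst sum.mono_neutral_right[of "{..Q}" "{Q}"]) auto
  also have "(\<Sum>m\<le>Q. of_nat (Q choose m) * W m) = pochhammer (v + u) Q"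
    unfolding W_def pochhammer_binomial_sum by (simp add: mult_ac)
  finally have S2: "S = tt Q * (W 0 + W Q - pochhammer (v + u) Q)" .
  show ?thesis using S1 S2 by (simp add: W_def add.commute)
qed

lemma rearr: "(a::real) * b * c * (d * e * f) = f * a * (d * b) * (e * c)" by (simp add: mult_ac)

lemma reidx:
  fixes n \<alpha> \<beta> r s :: int
  assumes "n \<ge> 0" "\<alpha> \<ge> 0" "\<beta> \<ge> 0" "n - \<alpha> - \<beta> \<ge> 0"
  defines "Q \<equiv> nat (2*(n-\<alpha>-\<beta>)+1)"
  defines "u \<equiv> (of_int (r + 2*\<alpha>) :: real)"
  defines "v \<equiv> (of_int (s + 2*\<beta>) :: real)"
  shows "(\<Sum>k\<in>{0..n}. \<Sum>l\<in>{0..k - 1}. gbin (r + s) n k * gbin r l \<alpha> * gbin s (k - 1 - l) \<beta>)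
    = (\<Sum>i=0..Q. \<Sum>j=0..Q-i. tt i * tt j * tt (Q-i-j) *
            (pochhammer u j * pochhammer v (Q-i-j) * pochhammer (u + v + of_nat (Q-i)) i))"
proof -
  define g where "g = (\<lambda>(k,l). gbin (r + s) n k * gbin r l \<alpha> * gbin s (k - 1 - l) \<beta>)"
  define h where "h = (\<lambda>(i,j). tt i * tt j * tt (Q-i-j) *
            (pochhammer u j * pochhammer v (Q-i-j) * pochhammer (u + v + of_nat (Q-i)) i))"
  define SA where "SA = (SIGMA k:{0..n}. {0..k - 1})"
  define S0 where "S0 = {(k,l)\<in>SA. \<alpha> \<le> l \<and> \<beta> \<le> k - 1 - l}"
  define TA where "TA = (SIGMA i:{0..Q}. {0..Q - i})"
  define T0 where "T0 = {(i,j)\<in>TA. odd i \<and> odd j \<and> odd (Q-i-j)}"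
  have "(\<Sum>k\<in>{0..n}. \<Sum>l\<in>{0..k - 1}. gbin (r + s) n k * gbin r l \<alpha> * gbin s (k - 1 - l) \<beta>) = sum g SA"
    unfolding SA_def g_def by (subst sum.Sigma) auto
  also have "\<dots> = sum g S0"
    by (rule sum.mono_neutral_right) (auto simp: SA_def S0_def g_def gbin_eq split: if_splits)
  also have "\<dots> = sum h T0"
  proof (rule sum.reindex_bij_witness[where j = "\<lambda>(k,l). (nat (2*(n-k)+1), nat (2*(l-\<alpha>)+1))"
        and i = "\<lambda>(a,b). (n - (int a - 1) div 2, \<alpha> + (int b - 1) div 2)"])
    fix a assume "a \<in> S0"
    then show "(case (case a of (k, l) \<Rightarrow> (nat (2 * (n - k) + 1), nat (2 * (l - \<alpha>) + 1))) of
           (a, b) \<Rightarrow> (n - (int a - 1) div 2, \<alpha> + (int b - 1) div 2)) = a"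
      by (auto simp: S0_def SA_def)
  next
    fix a assume "a \<in> S0"
    then show "(case a of (k, l) \<Rightarrow> (nat (2 * (n - k) + 1), nat (2 * (l - \<alpha>) + 1))) \<in> T0"
      using assms(1-4) by (auto simp: S0_def SA_def T0_def TA_def Q_def even_nat_iff nat_diff_distrib'; presburger)
  next
    fix b assume "b \<in> T0"
    then show "(case (case b of (a, b) \<Rightarrow> (n - (int a - 1) div 2, \<alpha> + (int b - 1) div 2)) of
           (k, l) \<Rightarrow> (nat (2 * (n - k) + 1), nat (2 * (l - \<alpha>) + 1))) = b"
      by (auto simp: T0_def TA_def; presburger)
  next
    fix p assume "p \<in> T0"
    then obtain a b where p: "p = (a,b)" "a \<le> Q" "b \<le> Q - a" "odd a" "odd b" "odd (Q-a-b)"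
      by (auto simp: T0_def TA_def)
    obtain a' where a': "a = 2*a'+1" using p(4) oddE by blast
    obtain b' where b': "b = 2*b'+1" using p(5) oddE by blast
    obtain c' where c': "Q - a - b = 2*c'+1" using p(6) oddE by blast
    have Qi: "int Q = 2*(n-\<alpha>-\<beta>)+1" unfolding Q_def using assms(4) by simp
    have n1: "2*a' + 2*b' + 2*c' + 3 = Q" using a' b' c' p by arith
    have sum3: "int a' + int b' + int c' + 1 = n - \<alpha> - \<beta>" using arg_cong[OF n1, of int] Qi by simp
    have d1: "(int a - 1) div 2 = int a'" using a' by simp
    have d2: "(int b - 1) div 2 = int b'" using b' by simp
    show "(case p of (a, b) \<Rightarrow> (n - (int a - 1) div 2, \<alpha> + (int b - 1) div 2)) \<in> S0"
      unfolding p(1) using sum3 assms(1-4) by (simp add: d1 d2 S0_def SA_def)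
  next
    fix a assume "a \<in> S0"
    then obtain k l where a: "a = (k,l)" and kl: "0 \<le> k" "k \<le> n" "0 \<le> l" "l \<le> k - 1" "\<alpha> \<le> l" "\<beta> \<le> k - 1 - l"
      by (auto simp: S0_def SA_def)
    define I where "I = nat (2*(n-k)+1)"
    define J where "J = nat (2*(l-\<alpha>)+1)"
    have iI: "int I = 2*(n-k)+1" unfolding I_def using kl by simp
    have iJ: "int J = 2*(l-\<alpha>)+1" unfolding J_def using kl by simp
    have iQ: "int Q = 2*(n-\<alpha>-\<beta>)+1" unfolding Q_def using assms(4) by simp
    have "int I + int J \<le> int Q" unfolding iI iJ iQ using kl by simp
    then have le: "I + J \<le> Q" by linarith
    then have "int (Q - I - J) = int Q - int I - int J" by simp
    then have "int (Q - I - J) = 2*(k-1-l-\<beta>)+1" using iI iJ iQ by simp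
    then have e1: "Q - I - J = nat (2*(k-1-l-\<beta>)+1)" by (metis nat_int)
    have e2: "u + v + of_nat (Q - I) = of_int (r + s + 2*k)"
    proof -
      have "int (Q - I) = int Q - int I" using le by simp
      then have "int (Q - I) = 2*(k - \<alpha> - \<beta>)" using iI iQ by simp
      then have "(of_nat (Q - I) :: real) = of_int (2*(k - \<alpha> - \<beta>))" by (metis of_int_of_nat_eq)
      then show ?thesis unfolding u_def v_def by simp
    qed
    have g1: "gbin (r+s) n k = pochhammer (of_int (r+s+2*k)) I * tt I"
      unfolding I_def using kl by (subst gbin_eq) simp
    have g2: "gbin r l \<alpha> = pochhammer u J * tt J"
      unfolding J_def u_def using kl assms by (subst gbin_eq) simp
    have g3: "gbin s (k-1-l) \<beta> = pochhammer v (Q-I-J) * tt (Q-I-J)"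
      unfolding e1 v_def using kl assms by (subst gbin_eq) simp
    have "h (I, J) = g (k, l)"
      unfolding h_def g_def prod.case g1 g2 g3 e2 by (rule rearr)
    then show "h (case a of (k, l) \<Rightarrow> (nat (2 * (n - k) + 1), nat (2 * (l - \<alpha>) + 1))) = g a"
      unfolding a prod.case I_def[symmetric] J_def[symmetric] .
  qed
  also have "\<dots> = sum h TA"
  proof (rule sum.mono_neutral_left)
    have oQ: "odd Q" unfolding Q_def using assms(4) by (simp add: even_nat_iff)
    show "\<forall>p\<in>TA - T0. h p = 0"
    proof
      fix p assume pT: "p \<in> TA - T0"
      obtain a b where p: "p = (a,b)" by (cases p)
      have nT: "\<not> (odd a \<and> odd b \<and> odd (Q-a-b))"
      proof
        assume H: "odd a \<and> odd b \<and> odd (Q-a-b)"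
        have "p \<in> T0" unfolding T0_def using pT H p by blast
        then show False using pT by blast
      qed
      show "h p = 0"
      proof (cases "even a")
        case True then show ?thesis unfolding p h_def by (simp add: tt_even)
      next
        case False
        show ?thesis
        proof (cases "even b")
          case True then show ?thesis unfolding p h_def by (simp add: tt_even)
        next
          case False
          then have "even (Q-a-b)" using nT \<open>\<not> even a\<close> by blast
          then have "tt (Q-a-b) = 0" by (rule tt_even)
          then show ?thesis unfolding p h_def by simp
        qed
      qed
    qed
  qed (auto simp: T0_def TA_def SA_def)
  also have "\<dots> = (\<Sum>i=0..Q. \<Sum>j=0..Q-i. tt i * tt j * tt (Q-i-j) *
            (pochhammer u j * pochhammer v (Q-i-j) * pochhammer (u + v + of_nat (Q-i)) i))"
    unfolding TA_def h_def by (subst sum.Sigma) auto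
  finally show ?thesis .
qed

theorem theorem6p1:
  fixes n \<alpha> \<beta> r s :: int
  assumes "n \<ge> 0" and "\<alpha> \<ge> 0" and "\<beta> \<ge> 0"
  shows "gbin r (n - \<beta>) \<alpha> + gbin s (n - \<alpha>) \<beta>
       = gbin (r + s) n (\<alpha> + \<beta>)
         + (\<Sum>k\<in>{0..n}. \<Sum>l\<in>{0..k - 1}.
              gbin (r + s) n k * gbin r l \<alpha> * gbin s (k - 1 - l) \<beta>)"
proof (cases "n - \<alpha> - \<beta> \<ge> 0")
  case False
  have z: "(\<Sum>k\<in>{0..n}. \<Sum>l\<in>{0..k - 1}.
              gbin (r + s) n k * gbin r l \<alpha> * gbin s (k - 1 - l) \<beta>) = 0"
  proof (intro sum.neutral ballI)
    fix k l assume k: "k \<in> {0..n}" and l: "l \<in> {0..k - 1}"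
    show "gbin (r + s) n k * gbin r l \<alpha> * gbin s (k - 1 - l) \<beta> = 0"
    proof (cases "\<alpha> \<le> l")
      case True
      then have "\<not> \<beta> \<le> k - 1 - l" using False k l by auto
      then show ?thesis by (simp add: gbin_eq)
    next
      case False
      then show ?thesis by (simp add: gbin_eq)
    qed
  qed
  show ?thesis unfolding z using False by (simp add: gbin_eq)
next
  case True
  define Q where "Q = nat (2*(n-\<alpha>-\<beta>)+1)"
  define u where "u = (of_int (r + 2*\<alpha>) :: real)"
  define v where "v = (of_int (s + 2*\<beta>) :: real)"
  have Q1: "Q \<ge> 1" unfolding Q_def using True by simp
  have l1: "gbin r (n - \<beta>) \<alpha> = pochhammer u Q * tt Q"
    unfolding Q_def u_def using True assms by (subst gbin_eq) (simp add: algebra_simps)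
  have l2: "gbin s (n - \<alpha>) \<beta> = pochhammer v Q * tt Q"
    unfolding Q_def v_def using True assms by (subst gbin_eq) (simp add: algebra_simps)
  have l3: "gbin (r + s) n (\<alpha> + \<beta>) = pochhammer (u + v) Q * tt Q"
    unfolding Q_def u_def v_def using True assms by (subst gbin_eq) (simp add: algebra_simps)
  show ?thesis
    unfolding l1 l2 l3 reidx[OF assms True, of r s, folded Q_def u_def v_def] F_ident[OF Q1]
    by (simp add: algebra_simps)
qed

end
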